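(* Let $G$ be a Polish group with a comeagre conjugacy class $C$, and suppose that some element of $C$ is conjugate with all of its non-zero powers. Then for every integer $n\neq 0$, the map $\pi:C\to C$, $\pi(g)=g^n$, is a surjective, continuous and open $G$-map (where $G$ acts on $C$ by conjugation and $C$ has the subspace topology). In particular, $\pi$ is categorical.
   Context: It is known (Marker–Sami / Becker–Kechris) that a comeagre conjugacy class $C$ of a Polish group is $G_\delta$, hence Polish in the subspace topology, and $G$ acts continuously and transitively on it by conjugation. A Borel map $\pi:X\to Y$ between Polish spaces is called categorical if: (1) images of nonmeagre analytic sets are nonmeagre; (2) images of comeagre analytic sets are comeagre; (3) preimages of meagre analytic sets are meagre; (4) preimages of nonmeagre analytic sets are nonmeagre; (5) preimages of comeagre analytic sets are comeagre. *)

theory Defs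
  imports "HOL-Analysis.Analysis" "HOL-Algebra.Group"
begin

definition Polish_space :: "'a topology \<Rightarrow> bool" where
  "Polish_space X \<longleftrightarrow> completely_metrizable_space X \<and> separable_space X"

definition polish_group :: "('a, 'b) monoid_scheme \<Rightarrow> 'a topology \<Rightarrow> bool" where
  "polish_group G T \<longleftrightarrow> group G \<and> topspace T = carrier G
     \<and> continuous_map (prod_topology T T) T (\<lambda>(x, y). x \<otimes>\<^bsub>G\<^esub> y)
     \<and> continuous_map T T (\<lambda>x. inv\<^bsub>G\<^esub> x)
     \<and> Polish_space T"

definition conj_class :: "('a, 'b) monoid_scheme \<Rightarrow> 'a \<Rightarrow> 'a set" where
  "conj_class G g = {h \<otimes>\<^bsub>G\<^esub> g \<otimes>\<^bsub>G\<^esub> inv\<^bsub>G\<^esub> h | h. h \<in> carrier G}"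

definition nowhere_dense :: "'a topology \<Rightarrow> 'a set \<Rightarrow> bool" where
  "nowhere_dense X S \<longleftrightarrow> S \<subseteq> topspace X \<and> X interior_of (X closure_of S) = {}"

definition meagre :: "'a topology \<Rightarrow> 'a set \<Rightarrow> bool" where
  "meagre X S \<longleftrightarrow> S \<subseteq> topspace X \<and>
     (\<exists>F :: nat \<Rightarrow> 'a set. (\<forall>n. nowhere_dense X (F n)) \<and> S \<subseteq> (\<Union>n. F n))"

definition comeagre :: "'a topology \<Rightarrow> 'a set \<Rightarrow> bool" where
  "comeagre X S \<longleftrightarrow> S \<subseteq> topspace X \<and> meagre X (topspace X - S)"

definition borel_sets :: "'a topology \<Rightarrow> 'a set set" where
  "borel_sets X = sigma_sets (topspace X) {U. openin X U}"

definition borel_map :: "'a topology \<Rightarrow> 'b topology \<Rightarrow> ('a \<Rightarrow> 'b) \<Rightarrow> bool" where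
  "borel_map X Y f \<longleftrightarrow> f ` topspace X \<subseteq> topspace Y \<and>
     (\<forall>B \<in> borel_sets Y. {x \<in> topspace X. f x \<in> B} \<in> borel_sets X)"

definition baire_space :: "(nat \<Rightarrow> nat) topology" where
  "baire_space = product_topology (\<lambda>_. discrete_topology UNIV) UNIV"

definition analytic :: "'a topology \<Rightarrow> 'a set \<Rightarrow> bool" where
  "analytic X A \<longleftrightarrow> A \<subseteq> topspace X \<and>
     (A = {} \<or> (\<exists>f. continuous_map baire_space X f \<and> f ` topspace baire_space = A))"

definition categorical :: "'a topology \<Rightarrow> 'b topology \<Rightarrow> ('a \<Rightarrow> 'b) \<Rightarrow> bool" where
  "categorical X Y f \<longleftrightarrow> borel_map X Y f \<and>
     (\<forall>A. analytic X A \<and> \<not> meagre X A \<longrightarrow> \<not> meagre Y (f ` A)) \<and>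
     (\<forall>A. analytic X A \<and> comeagre X A \<longrightarrow> comeagre Y (f ` A)) \<and>
     (\<forall>B. analytic Y B \<and> meagre Y B \<longrightarrow> meagre X {x \<in> topspace X. f x \<in> B}) \<and>
     (\<forall>B. analytic Y B \<and> \<not> meagre Y B \<longrightarrow> \<not> meagre X {x \<in> topspace X. f x \<in> B}) \<and>
     (\<forall>B. analytic Y B \<and> comeagre Y B \<longrightarrow> comeagre X {x \<in> topspace X. f x \<in> B})"

end

theory Submission
  imports Defs
begin


lemma nowhere_dense_subset:
  assumes "nowhere_dense X S" "T \<subseteq> S" shows "nowhere_dense X T"
proof -
  have "X interior_of (X closure_of T) \<subseteq> X interior_of (X closure_of S)"
    by (simp add: assms(2) closure_of_mono interior_of_mono)
  then show ?thesis using assms unfolding nowhere_dense_def by auto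
qed

lemma nowhere_dense_empty: "nowhere_dense X {}"
  by (simp add: nowhere_dense_def)

lemma meagre_subset:
  assumes "meagre X S" "T \<subseteq> S" shows "meagre X T"
  using assms unfolding meagre_def by blast

lemma meagre_empty: "meagre X {}"
  unfolding meagre_def by (rule conjI, simp, rule exI[of _ "\<lambda>_. {}"], simp add: nowhere_dense_empty)

lemma nowhere_dense_imp_meagre:
  assumes "nowhere_dense X S" shows "meagre X S"
proof -
  have "S \<subseteq> topspace X" using assms by (simp add: nowhere_dense_def)
  then show ?thesis unfolding meagre_def
    by (intro conjI exI[of _ "\<lambda>_::nat. S"]) (use assms in auto)
qed

lemma meagre_UN_nat:
  assumes "\<And>n::nat. meagre X (S n)" shows "meagre X (\<Union>n. S n)"
proof -
  have "\<forall>n. \<exists>F. (\<forall>m::nat. nowhere_dense X (F m)) \<and> S n \<subseteq> (\<Union>m. F m)"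
    using assms unfolding meagre_def by blast
  then obtain F where F: "\<forall>n. (\<forall>m::nat. nowhere_dense X (F n m)) \<and> S n \<subseteq> (\<Union>m. F n m)"
    by (rule choice[THEN exE])
  define H where "H k = F (fst (prod_decode k)) (snd (prod_decode k))" for k
  have sub: "(\<Union>n. S n) \<subseteq> (\<Union>k. H k)"
  proof
    fix x assume "x \<in> (\<Union>n. S n)"
    then obtain n m where "x \<in> F n m" using F by blast
    then have "x \<in> H (prod_encode (n, m))" by (simp add: H_def)
    then show "x \<in> (\<Union>k. H k)" by blast
  qed
  have top: "(\<Union>n. S n) \<subseteq> topspace X" using assms unfolding meagre_def by blast
  have nd: "\<forall>k. nowhere_dense X (H k)" unfolding H_def using F by blast
  show ?thesis unfolding meagre_def
    by (intro conjI exI[of _ H]) (use top sub nd in auto)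
qed

lemma meagre_Union_countable:
  assumes "countable \<S>" "\<And>S. S \<in> \<S> \<Longrightarrow> meagre X S" shows "meagre X (\<Union>\<S>)"
proof (cases "\<S> = {}")
  case True then show ?thesis by (simp add: meagre_empty)
next
  case False
  then have "\<S> = range (from_nat_into \<S>)" using assms(1) by (simp add: range_from_nat_into)
  moreover have "meagre X (\<Union>n. from_nat_into \<S> n)"
    by (rule meagre_UN_nat) (simp add: False assms(2) from_nat_into)
  ultimately show ?thesis by metis
qed

lemma meagre_Un:
  assumes "meagre X S" "meagre X T" shows "meagre X (S \<union> T)"
proof -
  have "S \<union> T = (\<Union>n::nat. if n = 0 then S else T)" by (auto split: if_splits)
  moreover have "meagre X (\<Union>n::nat. if n = 0 then S else T)"
    by (rule meagre_UN_nat) (simp add: assms)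
  ultimately show ?thesis by simp
qed

lemma meagre_imp_subset: "meagre X S \<Longrightarrow> S \<subseteq> topspace X"
  by (simp add: meagre_def)

lemma nowhere_dense_closedI:
  assumes "closedin X F" "X interior_of F = {}" shows "nowhere_dense X F"
  using assms by (simp add: nowhere_dense_def closedin_subset closure_of_closedin)

lemma Baire_open_meagre:
  assumes X: "completely_metrizable_space X" and U: "openin X U" "meagre X U"
  shows "U = {}"
proof -
  obtain F where F: "\<And>n::nat. nowhere_dense X (F n)" "U \<subseteq> (\<Union>n. F n)"
    using U(2) unfolding meagre_def by blast
  let ?G = "range (\<lambda>n. X closure_of F n)"
  have "X interior_of \<Union>?G = {}"
  proof (rule Baire_category_alt)
    show "completely_metrizable_space X \<or> locally_compact_space X \<and> regular_space X" using X by simp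
    show "countable ?G" by simp
    fix T assume "T \<in> ?G"
    then show "closedin X T \<and> X interior_of T = {}"
      using F(1) by (auto simp: nowhere_dense_def)
  qed
  moreover have "F n \<subseteq> X closure_of F n" for n
    using F(1)[of n] by (simp add: nowhere_dense_def closure_of_subset)
  then have "U \<subseteq> \<Union>?G"
  proof -
    assume cl: "\<And>n. F n \<subseteq> X closure_of F n"
    show ?thesis
    proof
      fix x assume "x \<in> U"
      then obtain n where "x \<in> F n" using F(2) by blast
      then show "x \<in> \<Union>?G" using cl[of n] by blast
    qed
  qed
  then have "U \<subseteq> X interior_of \<Union>?G"
    using U(1) by (simp add: interior_of_maximal)
  ultimately show ?thesis by blast
qed

definition bprop :: "'a topology \<Rightarrow> 'a set \<Rightarrow> bool" where
  "bprop X A \<longleftrightarrow> A \<subseteq> topspace X \<and> (\<exists>U. openin X U \<and> meagre X ((A - U) \<union> (U - A)))"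

lemma bprop_meagre: "meagre X A \<Longrightarrow> bprop X A"
  unfolding bprop_def by (auto intro!: exI[of _ "{}"] simp: meagre_def)

lemma bprop_UN_nat:
  assumes "\<And>n::nat. bprop X (A n)" shows "bprop X (\<Union>n. A n)"
proof -
  obtain U where U: "\<And>n. openin X (U n)" "\<And>n. meagre X ((A n - U n) \<union> (U n - A n))"
    using assms unfolding bprop_def by metis
  have "((\<Union>n. A n) - (\<Union>n. U n)) \<union> ((\<Union>n. U n) - (\<Union>n. A n)) \<subseteq> (\<Union>n. (A n - U n) \<union> (U n - A n))"
    by blast
  moreover have "meagre X (\<Union>n. (A n - U n) \<union> (U n - A n))" by (rule meagre_UN_nat) (rule U(2))
  ultimately show ?thesis
    using assms U(1) unfolding bprop_def by (metis (no_types, lifting) UN_least meagre_subset openin_Union image_iff)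
qed

lemma bprop_Union_countable:
  assumes "countable \<S>" "\<And>S. S \<in> \<S> \<Longrightarrow> bprop X S" shows "bprop X (\<Union>\<S>)"
proof (cases "\<S> = {}")
  case True then show ?thesis by (simp add: bprop_meagre meagre_empty)
next
  case False
  then have "\<S> = range (from_nat_into \<S>)" using assms(1) by (simp add: range_from_nat_into)
  moreover have "bprop X (\<Union>n. from_nat_into \<S> n)"
    by (rule bprop_UN_nat) (simp add: False assms(2) from_nat_into)
  ultimately show ?thesis by metis
qed

lemma nowhere_dense_boundary:
  assumes "closedin X F" shows "nowhere_dense X (F - X interior_of F)"
proof (rule nowhere_dense_closedI)
  show "closedin X (F - X interior_of F)" using assms by (simp add: closedin_diff)
  have "X interior_of (F - X interior_of F) \<subseteq> X interior_of F"
    by (simp add: interior_of_mono)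
  moreover have "X interior_of (F - X interior_of F) \<subseteq> F - X interior_of F"
    by (simp add: interior_of_subset)
  ultimately show "X interior_of (F - X interior_of F) = {}" by blast
qed

lemma bprop_compl:
  assumes "bprop X A" shows "bprop X (topspace X - A)"
proof -
  obtain U where U: "openin X U" "meagre X ((A - U) \<union> (U - A))"
    using assms unfolding bprop_def by blast
  let ?F = "topspace X - U"
  have F: "closedin X ?F" using U(1) by blast
  let ?V = "X interior_of ?F"
  have "((topspace X - A) - ?V) \<union> (?V - (topspace X - A)) \<subseteq> ((A - U) \<union> (U - A)) \<union> (?F - ?V)"
    using interior_of_subset[of X ?F] by blast
  moreover have "meagre X (((A - U) \<union> (U - A)) \<union> (?F - ?V))"
    by (rule meagre_Un[OF U(2) nowhere_dense_imp_meagre[OF nowhere_dense_boundary[OF F]]])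
  ultimately show ?thesis unfolding bprop_def
    by (meson Diff_subset meagre_subset openin_interior_of)
qed

lemma bprop_Un: "bprop X A \<Longrightarrow> bprop X B \<Longrightarrow> bprop X (A \<union> B)"
proof -
  assume "bprop X A" "bprop X B"
  then have "bprop X (\<Union>n::nat. if n = 0 then A else B)" by (intro bprop_UN_nat) simp
  moreover have "(\<Union>n::nat. if n = 0 then A else B) = A \<union> B" by (auto split: if_splits)
  ultimately show ?thesis by simp
qed

lemma bprop_Diff:
  assumes "bprop X A" "bprop X B" shows "bprop X (A - B)"
proof -
  have "A - B = topspace X - ((topspace X - A) \<union> B)"
    using assms unfolding bprop_def by blast
  then show ?thesis using assms by (simp add: bprop_Un bprop_compl)
qed

lemma bprop_openin: "openin X U \<Longrightarrow> bprop X U"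
  unfolding bprop_def by (auto intro!: exI[of _ U] simp: openin_subset meagre_empty)

lemma bprop_closedin: "closedin X F \<Longrightarrow> bprop X F"
  by (metis bprop_compl bprop_openin closedin_def double_diff order_refl)

lemma bprop_nonmeagre:
  assumes "bprop X A" "\<not> meagre X A"
  obtains U where "openin X U" "U \<noteq> {}" "meagre X (U - A)"
proof -
  obtain U where U: "openin X U" "meagre X ((A - U) \<union> (U - A))"
    using assms unfolding bprop_def by blast
  have "U \<noteq> {}" using U assms by auto
  then show ?thesis using U that meagre_subset by blast
qed



lemma (in Metric_space) second_countable_separable:
  assumes "separable_space mtopology" shows "second_countable mtopology"
proof -
  obtain D where D: "countable D" "D \<subseteq> M" "mtopology closure_of D = M"
    using assms unfolding separable_space_def by auto
  let ?B = "(\<lambda>(q,m). mball q (inverse (real (Suc m)))) ` (D \<times> (UNIV::nat set))"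
  show ?thesis unfolding second_countable_def
  proof (intro exI conjI ballI allI impI)
    show "countable ?B" using D(1) by simp
    show "openin mtopology V" if "V \<in> ?B" for V using that by auto
    fix U x assume "openin mtopology U \<and> x \<in> U"
    then obtain r where r: "r > 0" "mball x r \<subseteq> U" "x \<in> M"
      unfolding openin_mtopology by blast
    obtain m where m: "inverse (real (Suc m)) < r/2"
      using r(1) by (metis half_gt_zero_iff reals_Archimedean)
    let ?e = "inverse (real (Suc m))"
    have "x \<in> mtopology closure_of D" using D(3) r(3) by simp
    then obtain q where q: "q \<in> D" "q \<in> mball x ?e"
      unfolding in_closure_of using r(3) by (meson centre_in_mball_iff openin_mball inverse_Suc)
    show "\<exists>V\<in>?B. x \<in> V \<and> V \<subseteq> U"
    proof (intro bexI conjI)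
      show "mball q ?e \<in> ?B" using q(1) by auto
      show "x \<in> mball q ?e" using q(2) commute by auto
      show "mball q ?e \<subseteq> U"
      proof
        fix z assume z: "z \<in> mball q ?e"
        have "d x z \<le> d x q + d q z" using q z by (simp add: triangle)
        also have "\<dots> < r" using q z m by auto
        finally show "z \<in> U" using r z q by auto
      qed
    qed
  qed
qed

lemma second_countable_Polish:
  assumes "completely_metrizable_space X" "separable_space X" shows "second_countable X"
  using assms Metric_space.second_countable_separable unfolding completely_metrizable_space_def by metis

section \<open>Banach category theorem and hulls\<close>

definition Dcl :: "'a topology \<Rightarrow> 'a set \<Rightarrow> 'a set" where
  "Dcl X S = {x \<in> topspace X. \<forall>Ob. openin X Ob \<and> x \<in> Ob \<longrightarrow> \<not> meagre X (S \<inter> Ob)}"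

lemma closedin_Dcl: "closedin X (Dcl X S)"
proof -
  have "openin X (topspace X - Dcl X S)"
  proof (subst openin_subopen, intro ballI)
    fix x assume "x \<in> topspace X - Dcl X S"
    then obtain Ob where Ob: "openin X Ob" "x \<in> Ob" "meagre X (S \<inter> Ob)" unfolding Dcl_def by blast
    then have "Ob \<subseteq> topspace X - Dcl X S" unfolding Dcl_def using openin_subset by fastforce
    then show "\<exists>T. openin X T \<and> x \<in> T \<and> T \<subseteq> topspace X - Dcl X S" using Ob by blast
  qed
  then show ?thesis unfolding closedin_def Dcl_def by auto
qed

lemma Dcl_subset_closure: "Dcl X S \<subseteq> X closure_of S"
proof
  fix x assume x: "x \<in> Dcl X S"
  show "x \<in> X closure_of S" unfolding in_closure_of
  proof (intro conjI allI impI)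
    show "x \<in> topspace X" using x unfolding Dcl_def by blast
    fix T assume "x \<in> T \<and> openin X T"
    then have "\<not> meagre X (S \<inter> T)" using x unfolding Dcl_def by blast
    then have "S \<inter> T \<noteq> {}" using meagre_empty[of X] by metis
    then show "\<exists>y. y \<in> S \<and> y \<in> T" by blast
  qed
qed

lemma meagre_minus_Dcl:
  assumes "second_countable X" "S \<subseteq> topspace X" shows "meagre X (S - Dcl X S)"
proof -
  obtain \<B> where B: "countable \<B>" "\<forall>V\<in>\<B>. openin X V"
    "\<forall>U x. openin X U \<and> x \<in> U \<longrightarrow> (\<exists>V\<in>\<B>. x \<in> V \<and> V \<subseteq> U)"
    using assms(1) unfolding second_countable_def by blast
  let ?S = "(\<lambda>V. S \<inter> V) ` {V \<in> \<B>. meagre X (S \<inter> V)}"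
  have "meagre X (\<Union>?S)" by (rule meagre_Union_countable) (use B(1) in auto)
  moreover have "S - Dcl X S \<subseteq> \<Union>?S"
  proof
    fix x assume x: "x \<in> S - Dcl X S"
    then obtain Ob where Ob: "openin X Ob" "x \<in> Ob" "meagre X (S \<inter> Ob)"
      using assms(2) unfolding Dcl_def by blast
    then obtain V where V: "V \<in> \<B>" "x \<in> V" "V \<subseteq> Ob" using B(3) by blast
    then have "meagre X (S \<inter> V)" using Ob(3) meagre_subset by blast
    then show "x \<in> \<Union>?S" using V x by blast
  qed
  ultimately show ?thesis using meagre_subset by blast
qed

definition bhull :: "'a topology \<Rightarrow> 'a set \<Rightarrow> 'a set" where
  "bhull X S = Dcl X S \<union> S"

lemma bhull_bprop:
  assumes "second_countable X" "S \<subseteq> topspace X" shows "bprop X (bhull X S)"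
proof -
  let ?U = "X interior_of Dcl X S"
  have "(bhull X S - ?U) \<union> (?U - bhull X S) \<subseteq> (Dcl X S - ?U) \<union> (S - Dcl X S)"
    unfolding bhull_def using interior_of_subset[of X "Dcl X S"] by blast
  moreover have "meagre X ((Dcl X S - ?U) \<union> (S - Dcl X S))"
    by (intro meagre_Un nowhere_dense_imp_meagre nowhere_dense_boundary closedin_Dcl meagre_minus_Dcl assms)
  ultimately have "meagre X ((bhull X S - ?U) \<union> (?U - bhull X S))" using meagre_subset by blast
  moreover have "bhull X S \<subseteq> topspace X"
    using assms(2) closedin_subset[OF closedin_Dcl[of X S]] unfolding bhull_def by blast
  moreover have "openin X ?U" by simp
  ultimately show ?thesis unfolding bprop_def by blast
qed

lemma bhull_prop:
  assumes "Z \<subseteq> bhull X S - S" "bprop X Z" shows "meagre X Z"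
proof -
  obtain Ob where Ob: "openin X Ob" "meagre X ((Z - Ob) \<union> (Ob - Z))"
    using assms(2) unfolding bprop_def by blast
  have "Z \<inter> Ob = {}"
  proof (rule ccontr)
    assume "Z \<inter> Ob \<noteq> {}"
    then obtain x where "x \<in> Z" "x \<in> Ob" by blast
    then have "x \<in> Dcl X S" using assms(1) unfolding bhull_def by blast
    then have "\<not> meagre X (S \<inter> Ob)" using Ob(1) \<open>x \<in> Ob\<close> unfolding Dcl_def by blast
    moreover have "S \<inter> Ob \<subseteq> Ob - Z" using assms(1) by blast
    ultimately show False using Ob(2) meagre_subset by blast
  qed
  then have "Z \<subseteq> (Z - Ob) \<union> (Ob - Z)" by blast
  then show ?thesis using Ob(2) meagre_subset by blast
qed

lemma bhull_subset: "S \<subseteq> bhull X S" by (simp add: bhull_def)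
lemma bhull_subset_closure:
  assumes h: "S \<subseteq> topspace X" shows "bhull X S \<subseteq> X closure_of S"
proof -
  have "S \<subseteq> X closure_of S" using h by (rule closure_of_subset)
  then show ?thesis using Dcl_subset_closure[of X S] by (simp add: bhull_def)
qed



lemma bprop_scheme:
  fixes A :: "nat list \<Rightarrow> 'a set"
  assumes sc: "second_countable Y"
    and sub: "\<And>s. A s \<subseteq> topspace Y"
    and spl: "\<And>s. A s = (\<Union>k. A (k#s))"
    and branch: "\<And>l y. l 0 = [] \<Longrightarrow> (\<And>n. \<exists>k. l (Suc n) = k # l n)
                   \<Longrightarrow> (\<And>n. y \<in> Y closure_of A (l n)) \<Longrightarrow> y \<in> A []"
  shows "bprop Y (A [])"
proof -
  define H where "H s = bhull Y (A s)" for s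
  define Z where "Z s = H s - (\<Union>k. H (k#s))" for s
  have HB: "bprop Y (H s)" for s unfolding H_def by (rule bhull_bprop[OF sc sub])
  have ZB: "bprop Y (Z s)" for s unfolding Z_def by (rule bprop_Diff[OF HB bprop_UN_nat[OF HB]])
  have "Z s \<subseteq> H s - A s" for s
  proof -
    have "A s \<subseteq> (\<Union>k. H (k#s))"
    proof
      fix x assume "x \<in> A s"
      then obtain k where k: "x \<in> A (k#s)" using spl[of s] by blast
      have "A (k#s) \<subseteq> H (k#s)" unfolding H_def by (rule bhull_subset)
      then show "x \<in> (\<Union>k. H (k#s))" using k by blast
    qed
    then show ?thesis unfolding Z_def by blast
  qed
  then have ZM: "meagre Y (Z s)" for s
    using bhull_prop[of "Z s" Y "A s"] ZB[of s] unfolding H_def by blast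
  have M: "meagre Y (\<Union>(range Z))" by (rule meagre_Union_countable) (use ZM in auto)
  have "H [] - A [] \<subseteq> \<Union>(range Z)"
  proof
    fix y assume y: "y \<in> H [] - A []"
    show "y \<in> \<Union>(range Z)"
    proof (rule ccontr)
      assume nz: "y \<notin> \<Union>(range Z)"
      define l where "l = rec_nat [] (\<lambda>n ls. (SOME k. y \<in> H (k#ls)) # ls)"
      have l0: "l 0 = []" by (simp add: l_def)
      have lS: "l (Suc n) = (SOME k. y \<in> H (k # l n)) # l n" for n by (simp add: l_def)
      have yH: "y \<in> H (l n)" for n
      proof (induction n)
        case 0 then show ?case using y l0 by simp
      next
        case (Suc n)
        then have "\<exists>k. y \<in> H (k # l n)" using nz unfolding Z_def by blast
        then show ?case unfolding lS by (rule someI_ex)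
      qed
      have "y \<in> Y closure_of A (l n)" for n
        using yH[of n] bhull_subset_closure[OF sub[of "l n"]] unfolding H_def by blast
      then have "y \<in> A []" using branch[of l y] l0 lS by blast
      then show False using y by blast
    qed
  qed
  then have "meagre Y (H [] - A [])" using M meagre_subset by blast
  moreover have "A [] = H [] - (H [] - A [])" using bhull_subset[of "A []" Y] unfolding H_def by blast
  ultimately show ?thesis using bprop_Diff[OF HB[of "[]"] bprop_meagre] by metis
qed



definition cyl :: "nat list \<Rightarrow> (nat \<Rightarrow> nat) set" where
  "cyl s = {x. \<forall>i<length s. x i = rev s ! i}"

lemma cyl_Nil [simp]: "cyl [] = UNIV" by (simp add: cyl_def)

lemma cyl_Cons: "cyl (k#s) = cyl s \<inter> {x. x (length s) = k}"
  unfolding cyl_def by (auto simp: nth_append less_Suc_eq)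

lemma cyl_split: "cyl s = (\<Union>k. cyl (k#s))"
  unfolding cyl_Cons by blast

lemma topspace_baire [simp]: "topspace baire_space = UNIV"
  by (simp add: baire_space_def)

lemma baire_nbhd_cyl:
  assumes "openin baire_space W" "x \<in> W"
  shows "\<exists>n. \<forall>z. (\<forall>i<n. z i = x i) \<longrightarrow> z \<in> W"
proof -
  have "openin (product_topology (\<lambda>_. discrete_topology (UNIV::nat set)) UNIV) W"
    using assms(1) by (simp add: baire_space_def)
  then have h: "\<forall>x\<in>W. \<exists>U. finite {i \<in> UNIV. U i \<noteq> topspace (discrete_topology (UNIV::nat set))} \<and>
                 (\<forall>i \<in> UNIV. openin (discrete_topology UNIV) (U i)) \<and> x \<in> Pi\<^sub>E UNIV U \<and> Pi\<^sub>E UNIV U \<subseteq> W"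
    unfolding openin_product_topology_alt .
  obtain U where U: "finite {i \<in> UNIV. U i \<noteq> topspace (discrete_topology (UNIV::nat set))}"
    "x \<in> Pi\<^sub>E UNIV U" "Pi\<^sub>E UNIV U \<subseteq> W"
    using bspec[OF h assms(2)] by blast
  have "finite {i. U i \<noteq> UNIV}" using U(1) by simp
  then obtain n where n0: "{i. U i \<noteq> UNIV} \<subseteq> {..<n}" using finite_nat_bounded by blast
  have n: "\<forall>i\<in>{i. U i \<noteq> UNIV}. i < n" using n0 by blast
  show ?thesis
  proof (intro exI allI impI)
    fix z assume z: "\<forall>i<n. z i = x i"
    have "z \<in> Pi\<^sub>E UNIV U"
    proof (simp add: PiE_def Pi_def, intro allI)
      fix i show "z i \<in> U i"
        using z n U(2) by (cases "U i = UNIV") (auto simp: PiE_def Pi_def)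
    qed
    then show "z \<in> W" using U(3) by blast
  qed
qed

lemma bprop_baire_image:
  assumes f: "continuous_map baire_space Y f" and H: "Hausdorff_space Y" and sc: "second_countable Y"
  shows "bprop Y (f ` topspace baire_space)"
proof -
  define A where "A s = f ` cyl s" for s
  have "bprop Y (A [])"
  proof (rule bprop_scheme[OF sc])
    show "A s \<subseteq> topspace Y" for s
      unfolding A_def using continuous_map_image_subset_topspace[OF f] by auto
    show "A s = (\<Union>k. A (k#s))" for s
      unfolding A_def by (subst cyl_split) blast
    fix l y assume l0: "l 0 = []" and lS: "\<And>n. \<exists>k. l (Suc n) = k # l n"
      and y: "\<And>n. y \<in> Y closure_of A (l n)"
    define x where "x i = hd (l (Suc i))" for i
    have len: "length (l n) = n \<and> (\<forall>i<n. rev (l n) ! i = x i)" for n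
    proof (induction n)
      case 0 then show ?case using l0 by simp
    next
      case (Suc n)
      obtain k where k: "l (Suc n) = k # l n" using lS by blast
      have xn: "x n = k" unfolding x_def k by simp
      show ?case using Suc k xn by (auto simp: nth_append less_Suc_eq)
    qed
    then have xc: "x \<in> cyl (l n)" for n unfolding cyl_def by simp
    show "y \<in> A []"
    proof (rule ccontr)
      assume ny: "y \<notin> A []"
      have yt: "y \<in> topspace Y" using y[of 0] closure_of_subset_topspace[of Y "A (l 0)"] by blast
      have fx: "f x \<in> topspace Y" using continuous_map_image_subset_topspace[OF f] by auto
      have "x \<in> cyl []" by simp
      then have "f x \<in> A []" unfolding A_def by blast
      then have "y \<noteq> f x" using ny by blast
      moreover have "\<forall>a b. a \<in> topspace Y \<and> b \<in> topspace Y \<and> a \<noteq> b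
              \<longrightarrow> (\<exists>U V. openin Y U \<and> openin Y V \<and> a \<in> U \<and> b \<in> V \<and> disjnt U V)"
        using H unfolding Hausdorff_space_def .
      ultimately obtain U V where UV: "openin Y U" "openin Y V" "y \<in> U" "f x \<in> V" "disjnt U V"
        using yt fx by blast
      have op: "openin baire_space {z \<in> topspace baire_space. f z \<in> V}"
        using openin_continuous_map_preimage[OF f UV(2)] .
      have "x \<in> {z \<in> topspace baire_space. f z \<in> V}" using UV(4) by simp
      then obtain n where n0: "\<forall>z. (\<forall>i<n. z i = x i) \<longrightarrow> z \<in> {z \<in> topspace baire_space. f z \<in> V}"
        using baire_nbhd_cyl[OF op] by blast
      have n: "\<And>z. (\<forall>i<n. z i = x i) \<Longrightarrow> f z \<in> V" using n0 by blast
      have "cyl (l n) \<subseteq> {z. \<forall>i<n. z i = x i}"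
        using len[of n] unfolding cyl_def by auto
      then have "A (l n) \<subseteq> V" using n unfolding A_def by blast
      moreover obtain z where "z \<in> A (l n)" "z \<in> U" using y[of n] UV(1,3) unfolding in_closure_of by blast
      ultimately show False using UV(5) unfolding disjnt_def by blast
    qed
  qed
  then show ?thesis unfolding A_def by simp
qed



lemma half_pow_small: "(e::real) > 0 \<Longrightarrow> \<exists>n. (1/2::real)^n < e"
  using real_arch_pow_inv [of e "1/2"] by auto

context Metric_space begin

lemma bprop_open_image:
  assumes comp: "mcomplete" and sep: "separable_space mtopology" and P: "openin mtopology P"
    and f: "continuous_map mtopology Y f" and H: "Hausdorff_space Y" and sc: "second_countable Y"
  shows "bprop Y (f ` P)"
proof (cases "M = {}")
  case True
  have "P \<subseteq> M" using openin_subset[OF P] by simp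
  then have "P = {}" using True by blast
  then show ?thesis by (simp add: bprop_meagre meagre_empty)
next
  case Mne: False
  obtain D where D: "countable D" "D \<subseteq> M" "mtopology closure_of D = M"
    using sep unfolding separable_space_def by auto
  have Dne: "D \<noteq> {}" using D(3) Mne by auto
  define rad where "rad m = inverse (real (Suc m))" for m
  define ctr where "ctr i = from_nat_into D i" for i
  have ctrM: "ctr i \<in> M" for i unfolding ctr_def using from_nat_into[OF Dne] D(2) by blast
  have radpos: "rad m > 0" for m unfolding rad_def by simp
  define child where "child Q n k =
     (if mcball (ctr (fst (prod_decode k))) (rad (snd (prod_decode k))) \<subseteq> Q
         \<and> rad (snd (prod_decode k)) \<le> (1/2::real)^n
      then mball (ctr (fst (prod_decode k))) (rad (snd (prod_decode k))) else {})" for Q n k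
  have child_open: "openin mtopology (child Q n k)" for Q n k
    unfolding child_def by auto
  have child_sub: "child Q n k \<subseteq> Q" for Q n k
    unfolding child_def using mball_subset_mcball by auto
  have child_cover: "Q \<subseteq> (\<Union>k. child Q n k)" if Q: "openin mtopology Q" for Q n
  proof
    fix x assume x: "x \<in> Q"
    then obtain r where r: "r > 0" "mball x r \<subseteq> Q" "x \<in> M"
      using Q unfolding openin_mtopology by blast
    have "0 < min (r/2) ((1/2::real)^n)" using r(1) by simp
    then obtain m where m0: "inverse (real (Suc m)) < min (r/2) ((1/2::real)^n)"
      using reals_Archimedean by blast
    then have m: "rad m < r/2" "rad m \<le> (1/2::real)^n" unfolding rad_def by auto
    have "x \<in> mtopology closure_of D" using D(3) r(3) by simp
    moreover have "x \<in> mball x (rad m)" using r(3) radpos by simp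
    moreover have "openin mtopology (mball x (rad m))" by simp
    ultimately obtain q where q: "q \<in> D" "q \<in> mball x (rad m)"
      unfolding in_closure_of by blast
    define k where "k = prod_encode (to_nat_on D q, m)"
    have ck: "ctr (fst (prod_decode k)) = q" "snd (prod_decode k) = m"
      unfolding k_def ctr_def using q(1) D(1) by auto
    have "mcball q (rad m) \<subseteq> Q"
    proof
      fix z assume z: "z \<in> mcball q (rad m)"
      have "d x z \<le> d x q + d q z" using q z by (simp add: triangle)
      also have "\<dots> < r" using q z m by auto
      finally show "z \<in> Q" using r z q by auto
    qed
    then have "child Q n k = mball q (rad m)" unfolding child_def ck using m by auto
    moreover have "x \<in> mball q (rad m)" using q(2) commute by auto
    ultimately show "x \<in> (\<Union>k. child Q n k)" by blast
  qed
  define Q where "Q = rec_list P (\<lambda>k s q. child q (length s) k)"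
  have Q0: "Q [] = P" and QC: "Q (k#s) = child (Q s) (length s) k" for k s
    by (simp_all add: Q_def)
  have Qopen: "openin mtopology (Q s)" for s
    by (cases s) (simp_all add: Q0 QC P child_open)
  define A where "A s = f ` Q s" for s
  have "bprop Y (A [])"
  proof (rule bprop_scheme[OF sc])
    show "A s \<subseteq> topspace Y" for s
    proof -
      have "Q s \<subseteq> M" using openin_subset[OF Qopen[of s]] by simp
      then show ?thesis unfolding A_def using continuous_map_image_subset_topspace[OF f] by auto
    qed
    show "A s = (\<Union>k. A (k#s))" for s
    proof -
      have "Q s \<subseteq> (\<Union>k. Q (k#s))" unfolding QC using child_cover[OF Qopen[of s]] .
      moreover have "(\<Union>k. Q (k#s)) \<subseteq> Q s" unfolding QC using child_sub[of "Q s" "length s"] by blast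
      ultimately have "Q s = (\<Union>k. Q (k#s))" by (rule antisym)
      then show ?thesis unfolding A_def by blast
    qed
    fix l y assume l0: "l 0 = []" and lS: "\<And>n. \<exists>k. l (Suc n) = k # l n"
      and y: "\<And>n. y \<in> Y closure_of A (l n)"
    have len: "length (l n) = n" for n
    proof (induction n)
      case 0 then show ?case using l0 by simp
    next
      case (Suc n)
      obtain k where "l (Suc n) = k # l n" using lS by blast
      then show ?case using Suc by simp
    qed
    have Ane: "A (l n) \<noteq> {}" for n
      using y[of n] openin_topspace[of Y] unfolding in_closure_of by blast
    have ex: "\<forall>n. \<exists>q. \<exists>r. q \<in> M \<and> r > 0 \<and> r \<le> (1/2::real)^n \<and> Q (l (Suc n)) = mball q r \<and> mcball q r \<subseteq> Q (l n)"
    proof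
      fix n
      obtain k where k: "l (Suc n) = k # l n" using lS by blast
      have ne: "Q (l (Suc n)) \<noteq> {}" using Ane[of "Suc n"] unfolding A_def by blast
      let ?i = "fst (prod_decode k)" and ?m = "snd (prod_decode k)"
      have cond: "mcball (ctr ?i) (rad ?m) \<subseteq> Q (l n) \<and> rad ?m \<le> (1/2::real)^n"
      proof (rule ccontr)
        assume neg: "\<not> (mcball (ctr ?i) (rad ?m) \<subseteq> Q (l n) \<and> rad ?m \<le> (1/2::real)^n)"
        have "Q (l (Suc n)) = {}" unfolding k QC len child_def by (rule if_not_P[OF neg])
        then show False using ne by simp
      qed
      have eq: "Q (l (Suc n)) = mball (ctr ?i) (rad ?m)"
        unfolding k QC len child_def by (rule if_P[OF cond])
      show "\<exists>q. \<exists>r. q \<in> M \<and> r > 0 \<and> r \<le> (1/2::real)^n \<and> Q (l (Suc n)) = mball q r \<and> mcball q r \<subseteq> Q (l n)"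
        using cond eq ctrM radpos by blast
    qed
    then obtain qf where "\<forall>n. \<exists>r. qf n \<in> M \<and> r > 0 \<and> r \<le> (1/2::real)^n \<and> Q (l (Suc n)) = mball (qf n) r \<and> mcball (qf n) r \<subseteq> Q (l n)"
      by (rule choice[THEN exE])
    then obtain rf where "\<forall>n. qf n \<in> M \<and> rf n > 0 \<and> rf n \<le> (1/2::real)^n \<and> Q (l (Suc n)) = mball (qf n) (rf n) \<and> mcball (qf n) (rf n) \<subseteq> Q (l n)"
      by (rule choice[THEN exE])
    then have qr: "\<And>n. qf n \<in> M" "\<And>n. rf n > 0" "\<And>n. rf n \<le> (1/2::real)^n"
      "\<And>n. Q (l (Suc n)) = mball (qf n) (rf n)" "\<And>n. mcball (qf n) (rf n) \<subseteq> Q (l n)"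
      by blast+
    have dec: "Q (l (Suc n)) \<subseteq> Q (l n)" for n
      using qr(4,5)[of n] mball_subset_mcball[of "qf n" "rf n"] by blast
    have mono: "Q (l m) \<subseteq> Q (l n)" if "n \<le> m" for n m
      using lift_Suc_antimono_le[of "\<lambda>n. Q (l n)", OF dec that] .
    have close: "d (qf n) (qf m) < rf n" if "n \<le> m" for n m
    proof -
      have "qf m \<in> Q (l (Suc m))" using qr(1,2,4) by simp
      also have "\<dots> \<subseteq> Q (l (Suc n))" using mono that by simp
      finally show ?thesis using qr(4) by simp
    qed
    have "MCauchy qf"
      unfolding MCauchy_def
    proof (intro conjI allI impI)
      show "range qf \<subseteq> M" using qr(1) by blast
      fix e :: real assume "e > 0"
      then obtain N where N: "(1/2::real)^N < e/2" using half_pow_small[of "e/2"] by auto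
      show "\<exists>N. \<forall>n n'. N \<le> n \<longrightarrow> N \<le> n' \<longrightarrow> d (qf n) (qf n') < e"
      proof (intro exI allI impI)
        fix n n' assume nn: "N \<le> n" "N \<le> n'"
        have "d (qf n) (qf n') \<le> d (qf n) (qf N) + d (qf N) (qf n')"
          using qr(1) by (simp add: triangle)
        also have "d (qf n) (qf N) = d (qf N) (qf n)" using qr(1) by (simp add: commute)
        also have "d (qf N) (qf n) + d (qf N) (qf n') < rf N + rf N"
          using close[OF nn(1)] close[OF nn(2)] by simp
        also have "\<dots> < e" using qr(3)[of N] N by linarith
        finally show "d (qf n) (qf n') < e" .
      qed
    qed
    then obtain p where p: "limitin mtopology qf p sequentially"
      using comp unfolding mcomplete_def by blast
    have pM: "p \<in> M" using limitin_topspace[OF p] by simp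
    have pin: "p \<in> mcball (qf n) (rf n)" for n
    proof (rule limitin_closedin[OF p])
      show "closedin mtopology (mcball (qf n) (rf n))" by simp
      show "\<forall>\<^sub>F m in sequentially. qf m \<in> mcball (qf n) (rf n)"
        unfolding eventually_sequentially
      proof (intro exI[of _ n] allI impI)
        fix m assume "n \<le> m"
        then show "qf m \<in> mcball (qf n) (rf n)" using close[of n m] qr(1) by simp
      qed
    qed simp
    have pP: "p \<in> Q (l n)" for n using pin[of n] qr(5)[of n] by blast
    have "y = f p"
    proof (rule ccontr)
      assume ne: "y \<noteq> f p"
      have yt: "y \<in> topspace Y" using y[of 0] closure_of_subset_topspace[of Y "A (l 0)"] by blast
      have fp: "f p \<in> topspace Y" using continuous_map_image_subset_topspace[OF f] pM by auto
      have "\<forall>a b. a \<in> topspace Y \<and> b \<in> topspace Y \<and> a \<noteq> b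
              \<longrightarrow> (\<exists>U V. openin Y U \<and> openin Y V \<and> a \<in> U \<and> b \<in> V \<and> disjnt U V)"
        using H unfolding Hausdorff_space_def .
      then obtain U V where UV: "openin Y U" "openin Y V" "y \<in> U" "f p \<in> V" "disjnt U V"
        using yt fp ne by blast
      have op: "openin mtopology {z \<in> M. f z \<in> V}"
        using openin_continuous_map_preimage[OF f UV(2)] by simp
      have "p \<in> {z \<in> M. f z \<in> V}" using pM UV(4) by simp
      then obtain e where e: "e > 0" "mball p e \<subseteq> {z \<in> M. f z \<in> V}"
        using op unfolding openin_mtopology by blast
      obtain n where n: "(1/2::real)^n < e/2" using half_pow_small[of "e/2"] e(1) by auto
      have "Q (l (Suc n)) \<subseteq> mball p e"
      proof
        fix z assume "z \<in> Q (l (Suc n))"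
        then have z: "z \<in> M" "d (qf n) z < rf n" using qr(4) by auto
        have pq: "d (qf n) p \<le> rf n" using pin[of n] by simp
        have "d p z \<le> d p (qf n) + d (qf n) z" using z pM qr(1) by (simp add: triangle)
        also have "d p (qf n) = d (qf n) p" using pM qr(1) by (simp add: commute)
        also have "d (qf n) p + d (qf n) z < e" using pq z(2) qr(3)[of n] n by linarith
        finally show "z \<in> mball p e" using z pM by simp
      qed
      then have "A (l (Suc n)) \<subseteq> V" unfolding A_def using e(2) by blast
      moreover obtain z where "z \<in> A (l (Suc n))" "z \<in> U"
        using y[of "Suc n"] UV(1,3) unfolding in_closure_of by blast
      ultimately show False using UV(5) unfolding disjnt_def by blast
    qed
    then show "y \<in> A []" unfolding A_def Q0 using pP[of 0] l0 Q0 by simp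
  qed
  then show ?thesis unfolding A_def Q0 .
qed

end

lemma bprop_open_image_Polish:
  assumes "completely_metrizable_space X" "separable_space X" "openin X P"
    "continuous_map X Y f" "Hausdorff_space Y" "second_countable Y"
  shows "bprop Y (f ` P)"
proof -
  obtain M d where "Metric_space M d" "Metric_space.mcomplete M d" "X = Metric_space.mtopology M d"
    using assms(1) unfolding completely_metrizable_space_def by blast
  then show ?thesis using Metric_space.bprop_open_image assms(2-6) by blast
qed



lemma homeo_nowhere_dense:
  assumes f: "homeomorphic_map X Y f" and S: "nowhere_dense X S"
  shows "nowhere_dense Y (f ` S)"
proof -
  have St: "S \<subseteq> topspace X" using S by (simp add: nowhere_dense_def)
  have "Y closure_of (f ` S) = f ` (X closure_of S)" by (rule homeomorphic_map_closure_of[OF f St])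
  moreover have "Y interior_of (f ` (X closure_of S)) = f ` (X interior_of (X closure_of S))"
    by (rule homeomorphic_map_interior_of[OF f closure_of_subset_topspace])
  moreover have "f ` S \<subseteq> topspace Y"
    using St homeomorphic_imp_surjective_map[OF f] by blast
  ultimately show ?thesis using S by (simp add: nowhere_dense_def)
qed

lemma homeo_meagre:
  assumes f: "homeomorphic_map X Y f" and S: "meagre X S"
  shows "meagre Y (f ` S)"
proof -
  obtain F where F: "\<And>n::nat. nowhere_dense X (F n)" "S \<subseteq> (\<Union>n. F n)"
    using S unfolding meagre_def by blast
  have St: "S \<subseteq> topspace X" using S by (simp add: meagre_def)
  have "f ` S \<subseteq> (\<Union>n. f ` F n)" using F(2) by blast
  moreover have "\<forall>n. nowhere_dense Y (f ` F n)" using homeo_nowhere_dense[OF f F(1)] by blast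
  moreover have "f ` S \<subseteq> topspace Y"
    using St homeomorphic_imp_surjective_map[OF f] by blast
  ultimately show ?thesis unfolding meagre_def by (intro conjI exI[of _ "\<lambda>n. f ` F n"]) auto
qed

locale pgroup =
  fixes G (structure) and T :: "'a topology"
  assumes pg: "polish_group G T"
begin

sublocale group G using pg by (simp add: polish_group_def)

lemma topT: "topspace T = carrier G" using pg by (simp add: polish_group_def)
lemma Polish: "completely_metrizable_space T" "separable_space T"
  using pg by (simp_all add: polish_group_def Polish_space_def)

lemma cm_mult:
  assumes "continuous_map X T f" "continuous_map X T g"
  shows "continuous_map X T (\<lambda>x. f x \<otimes> g x)"
proof -
  have m: "continuous_map (prod_topology T T) T (\<lambda>(x, y). x \<otimes> y)"
    using pg by (simp add: polish_group_def)
  have "continuous_map X T ((\<lambda>(x, y). x \<otimes> y) \<circ> (\<lambda>x. (f x, g x)))"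
    by (rule continuous_map_compose[OF continuous_map_pairedI[OF assms] m])
  then show ?thesis by (simp add: o_def)
qed

lemma cm_inv:
  assumes "continuous_map X T f" shows "continuous_map X T (\<lambda>x. inv (f x))"
proof -
  have m: "continuous_map T T (\<lambda>x. inv x)" using pg by (simp add: polish_group_def)
  have "continuous_map X T ((\<lambda>x. inv x) \<circ> f)" by (rule continuous_map_compose[OF assms m])
  then show ?thesis by (simp add: o_def)
qed

lemma cm_const: "k \<in> carrier G \<Longrightarrow> continuous_map X T (\<lambda>x. k)"
  by (simp add: topT)

lemma cm_id: "continuous_map T T (\<lambda>x. x)"
  using continuous_map_id unfolding id_def .

lemma cm_natpow: "continuous_map T T (\<lambda>x. x [^] (n::nat))"
proof (induction n)
  case 0 then show ?case by (simp add: topT)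
next
  case (Suc n)
  have "continuous_map T T (\<lambda>x. x [^] n \<otimes> x)" by (rule cm_mult[OF Suc cm_id])
  then show ?case by simp
qed

lemma cm_intpow: "continuous_map T T (\<lambda>x. x [^] (n::int))"
proof (cases "n < 0")
  case True
  have e: "x [^] n = inv (x [^] (nat (-n)))" for x
    using int_pow_def2[where a=x and z=n and G=G] True by simp
  have "continuous_map T T (\<lambda>x. inv (x [^] (nat (-n))))" by (rule cm_inv[OF cm_natpow])
  then show ?thesis unfolding e .
next
  case False
  have e: "x [^] n = x [^] (nat n)" for x
    using int_pow_def2[where a=x and z=n and G=G] False by simp
  show ?thesis unfolding e by (rule cm_natpow)
qed

lemma inv_cancel_left: "k \<in> carrier G \<Longrightarrow> z \<in> carrier G \<Longrightarrow> inv k \<otimes> (k \<otimes> z) = z"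
  by (simp add: m_assoc[symmetric])
lemma inv_cancel_left': "k \<in> carrier G \<Longrightarrow> z \<in> carrier G \<Longrightarrow> k \<otimes> (inv k \<otimes> z) = z"
  by (simp add: m_assoc[symmetric])

definition cj :: "'a \<Rightarrow> 'a \<Rightarrow> 'a" where "cj k x = k \<otimes> x \<otimes> inv k"

lemma cj_closed [simp]: "k \<in> carrier G \<Longrightarrow> x \<in> carrier G \<Longrightarrow> cj k x \<in> carrier G"
  by (simp add: cj_def)

lemma cj_mult: "k \<in> carrier G \<Longrightarrow> x \<in> carrier G \<Longrightarrow> y \<in> carrier G \<Longrightarrow> cj k (x \<otimes> y) = cj k x \<otimes> cj k y"
  by (simp add: cj_def m_assoc inv_cancel_left)

lemma cj_cj: "k \<in> carrier G \<Longrightarrow> h \<in> carrier G \<Longrightarrow> x \<in> carrier G \<Longrightarrow> cj k (cj h x) = cj (k \<otimes> h) x"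
  by (simp add: cj_def m_assoc inv_mult_group)

lemma cj_inv_cancel: "k \<in> carrier G \<Longrightarrow> x \<in> carrier G \<Longrightarrow> cj (inv k) (cj k x) = x"
  by (simp add: cj_def m_assoc inv_cancel_left)

lemma cj_inv_cancel': "k \<in> carrier G \<Longrightarrow> x \<in> carrier G \<Longrightarrow> cj k (cj (inv k) x) = x"
  using cj_inv_cancel[of "inv k" x] by simp

lemma cj_hom: "k \<in> carrier G \<Longrightarrow> cj k \<in> hom G G"
  unfolding hom_def by (auto simp: cj_mult)

lemma cj_pow: "k \<in> carrier G \<Longrightarrow> x \<in> carrier G \<Longrightarrow> cj k (x [^] (n::int)) = (cj k x) [^] n"
proof -
  assume k: "k \<in> carrier G" and x: "x \<in> carrier G"
  show ?thesis using hom_int_pow[OF cj_hom[OF k] x is_group is_group, of n] .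
qed

lemma cm_cj: "k \<in> carrier G \<Longrightarrow> continuous_map T T (cj k)"
  unfolding cj_def by (intro cm_mult cm_const cm_id) auto

lemma homeo_cj: "k \<in> carrier G \<Longrightarrow> homeomorphic_map T T (cj k)"
proof -
  assume k: "k \<in> carrier G"
  have "homeomorphic_maps T T (cj k) (cj (inv k))"
    unfolding homeomorphic_maps_def using k
    by (simp add: cm_cj topT cj_inv_cancel cj_inv_cancel')
  then show ?thesis using homeomorphic_maps_map by blast
qed

lemma meagre_cj: "k \<in> carrier G \<Longrightarrow> meagre T S \<Longrightarrow> meagre T (cj k ` S)"
  using homeo_meagre[OF homeo_cj] by blast

lemma open_cj: "k \<in> carrier G \<Longrightarrow> openin T U \<Longrightarrow> openin T (cj k ` U)"
  using homeomorphic_map_openness[OF homeo_cj] openin_subset by blast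

lemma conj_class_cj: "conj_class G c = {cj h c | h. h \<in> carrier G}"
  by (simp add: conj_class_def cj_def)

lemma conj_class_self: "c \<in> carrier G \<Longrightarrow> c \<in> conj_class G c"
  unfolding conj_class_cj by (rule CollectI, rule exI[of _ \<one>]) (simp add: cj_def)

lemma conj_class_subset: "c \<in> carrier G \<Longrightarrow> conj_class G c \<subseteq> carrier G"
  unfolding conj_class_cj by auto

lemma conj_class_cj_mem:
  assumes c: "c \<in> carrier G" and y: "y \<in> conj_class G c" and k: "k \<in> carrier G"
  shows "cj k y \<in> conj_class G c"
proof -
  obtain h where h: "h \<in> carrier G" "y = cj h c" using y unfolding conj_class_cj by blast
  then have "cj k y = cj (k \<otimes> h) c" using c k by (simp add: cj_cj)
  moreover have "k \<otimes> h \<in> carrier G" using k h by simp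
  ultimately show ?thesis unfolding conj_class_cj by blast
qed

lemma conj_class_eq: "c \<in> carrier G \<Longrightarrow> y \<in> conj_class G c \<Longrightarrow> conj_class G y = conj_class G c"
proof -
  assume c: "c \<in> carrier G" and y: "y \<in> conj_class G c"
  then obtain h where h: "h \<in> carrier G" "y = cj h c" unfolding conj_class_cj by blast
  have yc: "y \<in> carrier G" using h c by simp
  show ?thesis
  proof
    show "conj_class G y \<subseteq> conj_class G c"
      unfolding conj_class_cj[of y] using conj_class_cj_mem[OF c y] by blast
    have "c = cj (inv h) y" using h c by (simp add: cj_inv_cancel)
    then have cy: "c \<in> conj_class G y" unfolding conj_class_cj using h by blast
    show "conj_class G c \<subseteq> conj_class G y"
    proof
      fix z assume "z \<in> conj_class G c"
      then obtain g where g: "g \<in> carrier G" "z = cj g c" unfolding conj_class_cj by blast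
      then show "z \<in> conj_class G y" using conj_class_cj_mem[OF yc cy g(1)] by simp
    qed
  qed
qed

end



locale pgc = pgroup +
  fixes C
  assumes Ccl: "\<exists>g \<in> carrier G. C = conj_class G g"
    and Ccom: "comeagre T C"
begin

lemma C_sub: "C \<subseteq> carrier G" using Ccl conj_class_subset by blast

lemma C_eq: "y \<in> C \<Longrightarrow> C = conj_class G y"
  using Ccl conj_class_eq by metis

lemma C_cj: "y \<in> C \<Longrightarrow> k \<in> carrier G \<Longrightarrow> cj k y \<in> C"
  using C_eq C_sub conj_class_cj_mem conj_class_self by (metis subsetD)

lemma HausT: "Hausdorff_space T"
  using Polish(1) completely_metrizable_imp_metrizable_space metrizable_imp_Hausdorff_space by blast

lemma scT: "second_countable T"
  using Polish second_countable_Polish by blast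

lemma BaireT: "openin T U \<Longrightarrow> meagre T U \<Longrightarrow> U = {}"
  using Baire_open_meagre[OF Polish(1)] by blast

lemma C_nonmeagre: "\<not> meagre T C"
proof
  assume "meagre T C"
  moreover have "meagre T (topspace T - C)" using Ccom by (simp add: comeagre_def)
  ultimately have "meagre T (C \<union> (topspace T - C))" by (rule meagre_Un)
  moreover have "C \<union> (topspace T - C) = topspace T" using C_sub topT by blast
  ultimately have M': "meagre T (topspace T)" by simp
  have "topspace T = {}" by (rule BaireT[OF openin_topspace M'])
  moreover have "\<one> \<in> topspace T" using topT by simp
  ultimately show False by blast
qed

lemma cm_orbit: "y \<in> carrier G \<Longrightarrow> continuous_map T T (\<lambda>g. cj g y)"
  unfolding cj_def by (intro cm_mult cm_const cm_id cm_inv) auto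

lemma stepA:
  assumes y: "y \<in> C" and W: "openin T W" "\<one> \<in> W"
  shows "\<not> meagre T ((\<lambda>g. cj g y) ` W)"
proof
  let ?I = "(\<lambda>g. cj g y) ` W"
  assume M: "meagre T ?I"
  obtain D where D: "countable D" "D \<subseteq> topspace T" "T closure_of D = topspace T"
    using Polish(2) unfolding separable_space_def by auto
  have yc: "y \<in> carrier G" using y C_sub by blast
  have "C \<subseteq> \<Union>((\<lambda>d. cj d ` ?I) ` D)"
  proof
    fix x assume "x \<in> C"
    then obtain g where g: "g \<in> carrier G" "x = cj g y"
      using C_eq[OF y] unfolding conj_class_cj by blast
    let ?S = "{z \<in> topspace T. inv z \<otimes> g \<in> W}"
    have "continuous_map T T (\<lambda>z. inv z \<otimes> g)"
      by (intro cm_mult cm_inv cm_id cm_const g(1))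
    then have So: "openin T ?S" using openin_continuous_map_preimage[OF _ W(1)] by blast
    have "g \<in> ?S" using g W topT by simp
    then have "g \<in> T closure_of D" using D(3) topT g by simp
    then have "\<forall>U. g \<in> U \<and> openin T U \<longrightarrow> (\<exists>y. y \<in> D \<and> y \<in> U)"
      unfolding in_closure_of by blast
    then have "g \<in> ?S \<and> openin T ?S \<longrightarrow> (\<exists>y. y \<in> D \<and> y \<in> ?S)" by (rule spec)
    then have "\<exists>y. y \<in> D \<and> y \<in> ?S" using So \<open>g \<in> ?S\<close> by blast
    then obtain d where d: "d \<in> D" "d \<in> ?S" by blast
    have dc: "d \<in> carrier G" using d topT by auto
    let ?w = "inv d \<otimes> g"
    have "cj d (cj ?w y) = cj (d \<otimes> ?w) y" using dc g yc by (simp add: cj_cj)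
    also have "d \<otimes> ?w = g" using dc g by (simp add: inv_cancel_left')
    finally have "x = cj d (cj ?w y)" using g by simp
    moreover have "?w \<in> W" using d by simp
    ultimately show "x \<in> \<Union>((\<lambda>d. cj d ` ?I) ` D)" using d(1) by blast
  qed
  moreover have "meagre T (\<Union>((\<lambda>d. cj d ` ?I) ` D))"
  proof (rule meagre_Union_countable)
    show "countable ((\<lambda>d. cj d ` ?I) ` D)" using D(1) by simp
    fix S assume "S \<in> (\<lambda>d. cj d ` ?I) ` D"
    then obtain d where "d \<in> D" "S = cj d ` ?I" by blast
    moreover have "d \<in> carrier G" using \<open>d \<in> D\<close> D(2) topT by blast
    ultimately show "meagre T S" using meagre_cj[OF _ M] by blast
  qed
  ultimately show False using C_nonmeagre meagre_subset[of T _ C] by blast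
qed

lemma stepB:
  assumes "y \<in> carrier G" "openin T P"
  shows "bprop T ((\<lambda>g. cj g y) ` P)"
  by (rule bprop_open_image_Polish[OF Polish assms(2) cm_orbit[OF assms(1)] HausT scT])

lemma nbhd_W:
  assumes V: "openin T V" "\<one> \<in> V"
  obtains W where "openin T W" "\<one> \<in> W" "\<And>a b. a \<in> W \<Longrightarrow> b \<in> W \<Longrightarrow> inv a \<otimes> b \<in> V"
proof -
  let ?S = "{p \<in> topspace (prod_topology T T). inv (fst p) \<otimes> snd p \<in> V}"
  have cmap: "continuous_map (prod_topology T T) T (\<lambda>p. inv (fst p) \<otimes> snd p)"
    by (intro cm_mult cm_inv continuous_map_fst continuous_map_snd)
  have op: "openin (prod_topology T T) ?S"
    by (rule openin_continuous_map_preimage[OF cmap V(1)])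
  have mem: "(\<one>, \<one>) \<in> ?S"
    using V topT by simp
  have "\<forall>x y. (x,y) \<in> ?S \<longrightarrow> (\<exists>U V. openin T U \<and> openin T V \<and> x \<in> U \<and> y \<in> V \<and> U \<times> V \<subseteq> ?S)"
    using op unfolding openin_prod_topology_alt .
  then have "(\<one>,\<one>) \<in> ?S \<longrightarrow> (\<exists>U V. openin T U \<and> openin T V \<and> \<one> \<in> U \<and> \<one> \<in> V \<and> U \<times> V \<subseteq> ?S)"
    by blast
  then obtain U1 U2 where U: "openin T U1" "openin T U2" "\<one> \<in> U1" "\<one> \<in> U2"
    "U1 \<times> U2 \<subseteq> ?S"
    using mem by blast
  show ?thesis
  proof (rule that[of "U1 \<inter> U2"])
    show "openin T (U1 \<inter> U2)" using U(1,2) by (rule openin_Int)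
    show "\<one> \<in> U1 \<inter> U2" using U by blast
    fix a b assume "a \<in> U1 \<inter> U2" "b \<in> U1 \<inter> U2"
    then have "(a, b) \<in> U1 \<times> U2" by blast
    then show "inv a \<otimes> b \<in> V" using U(5) by auto
  qed
qed

lemma stepL:
  assumes y: "y \<in> C" and V: "openin T V" "\<one> \<in> V"
  obtains U where "openin T U" "y \<in> U" "meagre T (U - (\<lambda>g. cj g y) ` V)"
proof -
  have yc: "y \<in> carrier G" using y C_sub by blast
  obtain W where W: "openin T W" "\<one> \<in> W" "\<And>a b. a \<in> W \<Longrightarrow> b \<in> W \<Longrightarrow> inv a \<otimes> b \<in> V"
    using nbhd_W[OF V] by blast
  let ?I = "(\<lambda>g. cj g y) ` W"
  obtain U0 where U0: "openin T U0" "U0 \<noteq> {}" "meagre T (U0 - ?I)"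
    using bprop_nonmeagre[OF stepB[OF yc W(1)] stepA[OF y W(1,2)]] by blast
  have "U0 \<inter> ?I \<noteq> {}"
  proof
    assume "U0 \<inter> ?I = {}"
    then have "U0 \<subseteq> U0 - ?I" by blast
    then have "meagre T U0" using U0(3) meagre_subset by blast
    then show False using BaireT U0(1,2) by blast
  qed
  then obtain w0 where w0: "w0 \<in> W" "cj w0 y \<in> U0" by blast
  have w0c: "w0 \<in> carrier G" using w0 openin_subset[OF W(1)] topT by blast
  let ?U1 = "cj (inv w0) ` U0"
  show ?thesis
  proof (rule that[of ?U1])
    show "openin T ?U1" using open_cj U0(1) w0c by simp
    have "cj (inv w0) (cj w0 y) = y" using w0c yc by (simp add: cj_inv_cancel)
    then show "y \<in> ?U1" using w0 by (metis imageI)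
    have "?U1 - (\<lambda>g. cj g y) ` V \<subseteq> cj (inv w0) ` (U0 - ?I)"
    proof
      fix z assume z: "z \<in> ?U1 - (\<lambda>g. cj g y) ` V"
      then obtain u where u: "u \<in> U0" "z = cj (inv w0) u" by blast
      have "u \<notin> ?I"
      proof
        assume "u \<in> ?I"
        then obtain w where w: "w \<in> W" "u = cj w y" by blast
        have wc: "w \<in> carrier G" using w openin_subset[OF W(1)] topT by blast
        have "z = cj (inv w0 \<otimes> w) y" using u w wc w0c yc by (simp add: cj_cj)
        moreover have "inv w0 \<otimes> w \<in> V" using W(3) w0 w by blast
        ultimately show False using z by blast
      qed
      then show "z \<in> cj (inv w0) ` (U0 - ?I)" using u by blast
    qed
    moreover have "meagre T (cj (inv w0) ` (U0 - ?I))" using meagre_cj U0(3) w0c by simp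
    ultimately show "meagre T (?U1 - (\<lambda>g. cj g y) ` V)" using meagre_subset by blast
  qed
qed

lemma stepO:
  assumes c: "c \<in> C" and V: "openin T V" "\<one> \<in> V"
  obtains U where "openin T U" "c \<in> U" "U \<inter> C \<subseteq> (\<lambda>g. cj g c) ` V"
proof -
  obtain W where W: "openin T W" "\<one> \<in> W" "\<And>a b. a \<in> W \<Longrightarrow> b \<in> W \<Longrightarrow> inv a \<otimes> b \<in> V"
    using nbhd_W[OF V] by blast
  obtain U where U: "openin T U" "c \<in> U" "meagre T (U - (\<lambda>g. cj g c) ` W)"
    using stepL[OF c W(1,2)] by blast
  have cc: "c \<in> carrier G" using c C_sub by blast
  show ?thesis
  proof (rule that[OF U(1,2)], rule subsetI)
    fix y assume y: "y \<in> U \<inter> C"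
    have yc: "y \<in> carrier G" using y C_sub by blast
    obtain Uy where Uy: "openin T Uy" "y \<in> Uy" "meagre T (Uy - (\<lambda>g. cj g y) ` W)"
      using stepL[of y W] y W(1,2) by blast
    let ?O = "U \<inter> Uy"
    have "?O \<inter> (\<lambda>g. cj g c) ` W \<inter> (\<lambda>g. cj g y) ` W \<noteq> {}"
    proof
      assume "?O \<inter> (\<lambda>g. cj g c) ` W \<inter> (\<lambda>g. cj g y) ` W = {}"
      then have "?O \<subseteq> (U - (\<lambda>g. cj g c) ` W) \<union> (Uy - (\<lambda>g. cj g y) ` W)" by blast
      then have "meagre T ?O" using meagre_Un[OF U(3) Uy(3)] meagre_subset by blast
      then have "?O = {}" using BaireT U(1) Uy(1) by blast
      then show False using y Uy(2) by blast
    qed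
    then obtain w1 w2 where w: "w1 \<in> W" "w2 \<in> W" "cj w1 c = cj w2 y" by blast
    have wc: "w1 \<in> carrier G" "w2 \<in> carrier G" using w openin_subset[OF W(1)] topT by blast+
    have "y = cj (inv w2) (cj w2 y)" using wc yc by (simp add: cj_inv_cancel)
    also have "\<dots> = cj (inv w2) (cj w1 c)" using w by simp
    also have "\<dots> = cj (inv w2 \<otimes> w1) c" using wc cc by (simp add: cj_cj)
    finally show "y \<in> (\<lambda>g. cj g c) ` V" using W(3)[OF w(2) w(1)] by blast
  qed
qed

end



lemma borel_map_continuous:
  assumes f: "continuous_map X Y f" shows "borel_map X Y f"
proof -
  have img: "f ` topspace X \<subseteq> topspace Y" using continuous_map_image_subset_topspace[OF f] .
  have "{x \<in> topspace X. f x \<in> B} \<in> sigma_sets (topspace X) {U. openin X U}"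
    if "B \<in> sigma_sets (topspace Y) {U. openin Y U}" for B
    using that
  proof (induction rule: sigma_sets.induct)
    case (Basic a)
    then have "openin X {x \<in> topspace X. f x \<in> a}" using openin_continuous_map_preimage[OF f] by simp
    then show ?case by blast
  next
    case Empty then show ?case by (simp add: sigma_sets.Empty)
  next
    case (Compl a)
    have "{x \<in> topspace X. f x \<in> topspace Y - a} = topspace X - {x \<in> topspace X. f x \<in> a}"
      using img by blast
    then show ?case using sigma_sets.Compl[OF Compl.IH] by simp
  next
    case (Union a)
    have "{x \<in> topspace X. f x \<in> (\<Union>i. a i)} = (\<Union>i. {x \<in> topspace X. f x \<in> a i})" by blast
    then show ?case using sigma_sets.Union[OF Union.IH] by simp
  qed
  then show ?thesis unfolding borel_map_def borel_sets_def using img by blast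
qed

lemma nowhere_dense_preimage:
  assumes f: "continuous_map X Y f" and o: "open_map X Y f" and N: "nowhere_dense Y N"
  shows "nowhere_dense X {x \<in> topspace X. f x \<in> N}"
proof -
  let ?S = "{x \<in> topspace X. f x \<in> N}"
  let ?K = "{x \<in> topspace X. f x \<in> Y closure_of N}"
  have "closedin X ?K" using closedin_continuous_map_preimage[OF f] by simp
  moreover have "?S \<subseteq> ?K"
  proof -
    have Nt: "N \<subseteq> topspace Y" using N unfolding nowhere_dense_def by blast
    have "N \<subseteq> Y closure_of N" by (rule closure_of_subset[OF Nt])
    then show ?thesis by blast
  qed
  ultimately have "X closure_of ?S \<subseteq> ?K" by (rule closure_of_minimal[rotated])
  then have sub: "X interior_of (X closure_of ?S) \<subseteq> ?K" using interior_of_subset[of X "X closure_of ?S"] by blast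
  let ?O = "X interior_of (X closure_of ?S)"
  have "openin Y (f ` ?O)" using o unfolding open_map_def by simp
  moreover have "f ` ?O \<subseteq> Y closure_of N" using sub by blast
  ultimately have "f ` ?O \<subseteq> Y interior_of (Y closure_of N)" by (simp add: interior_of_maximal)
  then have "?O = {}" using N unfolding nowhere_dense_def by blast
  then show ?thesis unfolding nowhere_dense_def by blast
qed

lemma meagre_preimage:
  assumes f: "continuous_map X Y f" and o: "open_map X Y f" and B: "meagre Y B"
  shows "meagre X {x \<in> topspace X. f x \<in> B}"
proof -
  obtain F where F: "\<And>n::nat. nowhere_dense Y (F n)" "B \<subseteq> (\<Union>n. F n)"
    using B unfolding meagre_def by blast
  have "{x \<in> topspace X. f x \<in> B} \<subseteq> (\<Union>n. {x \<in> topspace X. f x \<in> F n})" using F(2) by blast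
  moreover have "\<forall>n. nowhere_dense X {x \<in> topspace X. f x \<in> F n}"
    using nowhere_dense_preimage[OF f o F(1)] by blast
  ultimately show ?thesis unfolding meagre_def
    by (intro conjI exI[of _ "\<lambda>n. {x \<in> topspace X. f x \<in> F n}"]) auto
qed

lemma analytic_image:
  assumes A: "analytic X A" and f: "continuous_map X Y f" shows "analytic Y (f ` A)"
proof (cases "A = {}")
  case True then show ?thesis by (simp add: analytic_def)
next
  case False
  then obtain g where g: "continuous_map baire_space X g" "g ` topspace baire_space = A"
    using A unfolding analytic_def by blast
  have "continuous_map baire_space Y (f \<circ> g)" using continuous_map_compose[OF g(1) f] .
  moreover have "(f \<circ> g) ` topspace baire_space = f ` A" using g(2) by auto
  moreover have "f ` A \<subseteq> topspace Y"
    using A continuous_map_image_subset_topspace[OF f] unfolding analytic_def by blast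
  ultimately show ?thesis unfolding analytic_def by blast
qed

lemma categorical_general:
  assumes BX: "\<And>U. openin X U \<Longrightarrow> meagre X U \<Longrightarrow> U = {}"
    and BPY: "\<And>B. analytic Y B \<Longrightarrow> bprop Y B"
    and f: "continuous_map X Y f" and o: "open_map X Y f" and s: "f ` topspace X = topspace Y"
  shows "categorical X Y f"
  unfolding categorical_def
proof (intro conjI allI impI)
  show "borel_map X Y f" by (rule borel_map_continuous[OF f])
next
  fix A assume A: "analytic X A \<and> \<not> meagre X A"
  show "\<not> meagre Y (f ` A)"
  proof
    assume "meagre Y (f ` A)"
    then have "meagre X {x \<in> topspace X. f x \<in> f ` A}" by (rule meagre_preimage[OF f o])
    moreover have "A \<subseteq> {x \<in> topspace X. f x \<in> f ` A}" using A unfolding analytic_def by blast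
    ultimately show False using A meagre_subset by blast
  qed
next
  fix A assume A: "analytic X A \<and> comeagre X A"
  have fA: "f ` A \<subseteq> topspace Y" using A s unfolding analytic_def by blast
  obtain U where U: "openin Y U" "meagre Y ((f ` A - U) \<union> (U - f ` A))"
    using BPY[OF analytic_image[OF conjunct1[OF A] f]] unfolding bprop_def by blast
  let ?O = "topspace Y - Y closure_of U"
  have Oo: "openin Y ?O" by (rule openin_diff[OF openin_topspace closedin_closure_of])
  let ?P = "{x \<in> topspace X. f x \<in> ?O}"
  have Po: "openin X ?P" using openin_continuous_map_preimage[OF f Oo] .
  have Ucl: "U \<subseteq> Y closure_of U" by (rule closure_of_subset[OF openin_subset[OF U(1)]])
  have sub1: "?P \<subseteq> {x \<in> topspace X. f x \<in> f ` A - U} \<union> (topspace X - A)"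
    using Ucl by blast
  have m1: "meagre X {x \<in> topspace X. f x \<in> f ` A - U}"
    by (rule meagre_preimage[OF f o meagre_subset[OF U(2)]]) blast
  have m2: "meagre X (topspace X - A)" using A by (simp add: comeagre_def)
  have "meagre X ?P" by (rule meagre_subset[OF meagre_Un[OF m1 m2] sub1])
  then have "?P = {}" using BX Po by blast
  have "?O \<subseteq> f ` ?P"
  proof
    fix y assume y: "y \<in> ?O"
    then have "y \<in> f ` topspace X" using s by blast
    then obtain x where "x \<in> topspace X" "y = f x" by blast
    then show "y \<in> f ` ?P" using y by blast
  qed
  then have "?O = {}" using \<open>?P = {}\<close> by blast
  then have dense: "Y closure_of U = topspace Y" using closure_of_subset_topspace[of Y U] by blast
  have nd: "nowhere_dense Y (topspace Y - U)"
  proof (rule nowhere_dense_closedI)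
    show "closedin Y (topspace Y - U)" by (rule closedin_diff[OF closedin_topspace U(1)])
    show "Y interior_of (topspace Y - U) = {}"
    proof (rule ccontr)
      assume "Y interior_of (topspace Y - U) \<noteq> {}"
      then obtain x where x: "x \<in> Y interior_of (topspace Y - U)" by blast
      then have "x \<in> Y closure_of U" using dense interior_of_subset_topspace[of Y "topspace Y - U"] by blast
      then have "\<forall>T. x \<in> T \<and> openin Y T \<longrightarrow> (\<exists>y. y \<in> U \<and> y \<in> T)"
        unfolding in_closure_of by blast
      then have "x \<in> Y interior_of (topspace Y - U) \<and> openin Y (Y interior_of (topspace Y - U))
                 \<longrightarrow> (\<exists>y. y \<in> U \<and> y \<in> Y interior_of (topspace Y - U))" by (rule spec)
      then obtain z where "z \<in> U" "z \<in> Y interior_of (topspace Y - U)"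
        using x by auto
      then show False using interior_of_subset[of Y "topspace Y - U"] by blast
    qed
  qed
  have "topspace Y - f ` A \<subseteq> (U - f ` A) \<union> (topspace Y - U)" by blast
  moreover have "meagre Y ((U - f ` A) \<union> (topspace Y - U))"
    by (rule meagre_Un[OF meagre_subset[OF U(2)] nowhere_dense_imp_meagre[OF nd]]) blast
  ultimately have "meagre Y (topspace Y - f ` A)" by (rule meagre_subset[rotated])
  then show "comeagre Y (f ` A)" unfolding comeagre_def using fA by blast
next
  fix B assume B: "analytic Y B \<and> meagre Y B"
  then show "meagre X {x \<in> topspace X. f x \<in> B}" using meagre_preimage[OF f o] by blast
next
  fix B assume B: "analytic Y B \<and> \<not> meagre Y B"
  have an: "analytic Y B" and nm: "\<not> meagre Y B" using B by blast+
  obtain U where U: "openin Y U" "U \<noteq> {}" "meagre Y (U - B)"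
    by (rule bprop_nonmeagre[OF BPY[OF an] nm])
  let ?P = "{x \<in> topspace X. f x \<in> U}"
  have Po: "openin X ?P" using openin_continuous_map_preimage[OF f U(1)] .
  have Pne: "?P \<noteq> {}"
  proof -
    obtain u where u: "u \<in> U" using U(2) by blast
    then have "u \<in> f ` topspace X" using openin_subset[OF U(1)] s by blast
    then obtain x where "x \<in> topspace X" "u = f x" by blast
    then have "x \<in> ?P" using u by blast
    then show ?thesis by blast
  qed
  show "\<not> meagre X {x \<in> topspace X. f x \<in> B}"
  proof
    assume "meagre X {x \<in> topspace X. f x \<in> B}"
    moreover have "meagre X {x \<in> topspace X. f x \<in> U - B}" by (rule meagre_preimage[OF f o U(3)])
    ultimately have mm: "meagre X ({x \<in> topspace X. f x \<in> B} \<union> {x \<in> topspace X. f x \<in> U - B})"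
      by (rule meagre_Un)
    have "?P \<subseteq> {x \<in> topspace X. f x \<in> B} \<union> {x \<in> topspace X. f x \<in> U - B}" by blast
    then have "meagre X ?P" by (rule meagre_subset[OF mm])
    then show False using BX Po Pne by blast
  qed
next
  fix B assume B: "analytic Y B \<and> comeagre Y B"
  have "topspace X - {x \<in> topspace X. f x \<in> B} = {x \<in> topspace X. f x \<in> topspace Y - B}"
    using continuous_map_image_subset_topspace[OF f] by blast
  moreover have "meagre Y (topspace Y - B)" using B by (simp add: comeagre_def)
  then have "meagre X {x \<in> topspace X. f x \<in> topspace Y - B}"
    by (rule meagre_preimage[OF f o])
  ultimately show "comeagre X {x \<in> topspace X. f x \<in> B}" unfolding comeagre_def by auto
qed

lemma Baire_comeagre_subspace:
  assumes T: "completely_metrizable_space T" and C: "comeagre T C"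
    and U: "openin (subtopology T C) U" "meagre (subtopology T C) U"
  shows "U = {}"
proof -
  have Ct: "C \<subseteq> topspace T" using C by (simp add: comeagre_def)
  have mC: "meagre T (topspace T - C)" using C by (simp add: comeagre_def)
  have dense: "T closure_of C = topspace T"
  proof (rule ccontr)
    assume ne: "T closure_of C \<noteq> topspace T"
    let ?O = "topspace T - T closure_of C"
    have Oo: "openin T ?O" by (rule openin_diff[OF openin_topspace closedin_closure_of])
    have "C \<subseteq> T closure_of C" by (rule closure_of_subset[OF Ct])
    then have "?O \<subseteq> topspace T - C" by blast
    then have "meagre T ?O" by (rule meagre_subset[OF mC])
    then have "?O = {}" by (rule Baire_open_meagre[OF T Oo])
    then show False using ne closure_of_subset_topspace[of T C] by blast
  qed
  have nd: "nowhere_dense T S" if S: "nowhere_dense (subtopology T C) S" for S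
  proof -
    have SC: "S \<subseteq> C" "S \<subseteq> topspace T" using S Ct by (auto simp: nowhere_dense_def)
    let ?O = "T interior_of (T closure_of S)"
    have "C \<inter> S = S" using SC by blast
    then have eq: "(subtopology T C) closure_of S = C \<inter> T closure_of S"
      by (simp add: closure_of_subtopology)
    have "?O \<inter> C \<subseteq> (subtopology T C) closure_of S"
      unfolding eq using interior_of_subset[of T "T closure_of S"] by blast
    moreover have "openin (subtopology T C) (?O \<inter> C)"
      by (rule openin_subtopology_Int[OF openin_interior_of])
    ultimately have "?O \<inter> C \<subseteq> (subtopology T C) interior_of ((subtopology T C) closure_of S)"
      by (rule interior_of_maximal)
    then have OC: "?O \<inter> C = {}" using S unfolding nowhere_dense_def by blast
    have "?O = {}"
    proof (rule ccontr)
      assume "?O \<noteq> {}"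
      then obtain x where x: "x \<in> ?O" by blast
      then have "x \<in> T closure_of C" using dense interior_of_subset_topspace[of T "T closure_of S"] by blast
      then have "\<forall>W. x \<in> W \<and> openin T W \<longrightarrow> (\<exists>y. y \<in> C \<and> y \<in> W)"
        unfolding in_closure_of by blast
      then have "x \<in> ?O \<and> openin T ?O \<longrightarrow> (\<exists>y. y \<in> C \<and> y \<in> ?O)" by (rule spec)
      then obtain z where "z \<in> C" "z \<in> ?O" using x by auto
      then show False using OC by blast
    qed
    then show ?thesis using SC unfolding nowhere_dense_def by blast
  qed
  obtain Ob where Ob: "openin T Ob" "U = Ob \<inter> C" using U(1) unfolding openin_subtopology by blast
  obtain F where F: "\<And>n::nat. nowhere_dense (subtopology T C) (F n)" "U \<subseteq> (\<Union>n. F n)"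
    using U(2) unfolding meagre_def by blast
  have Fn: "\<forall>n. nowhere_dense T (F n)" using nd[OF F(1)] by blast
  have Ut: "U \<subseteq> topspace T" using Ob(2) Ct by blast
  have mU: "meagre T U" unfolding meagre_def
    by (intro conjI exI[of _ F] Ut Fn F(2))
  have "Ob \<subseteq> U \<union> (topspace T - C)" using Ob openin_subset[OF Ob(1)] by blast
  then have "meagre T Ob" by (rule meagre_subset[OF meagre_Un[OF mU mC]])
  then have "Ob = {}" by (rule Baire_open_meagre[OF T Ob(1)])
  then show ?thesis using Ob by blast
qed

lemma bprop_analytic:
  assumes "analytic Y B" "Hausdorff_space Y" "second_countable Y"
  shows "bprop Y B"
proof (cases "B = {}")
  case True then show ?thesis by (simp add: bprop_meagre meagre_empty)
next
  case False
  then obtain g where "continuous_map baire_space Y g" "g ` topspace baire_space = B"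
    using assms(1) unfolding analytic_def by blast
  then show ?thesis using bprop_baire_image[OF _ assms(2,3)] by blast
qed



context pgc begin

lemma cj_one [simp]: "x \<in> carrier G \<Longrightarrow> cj \<one> x = x"
  by (simp add: cj_def)

lemma main_pgc:
  assumes c: "c \<in> C" and cpow: "\<forall>k::int. k \<noteq> 0 \<longrightarrow> c [^] k \<in> conj_class G c"
    and n: "n \<noteq> (0::int)"
  shows "(\<lambda>g. g [^] n) ` C = C
    \<and> continuous_map (subtopology T C) (subtopology T C) (\<lambda>g. g [^] n)
    \<and> open_map (subtopology T C) (subtopology T C) (\<lambda>g. g [^] n)
    \<and> (\<forall>h \<in> carrier G. \<forall>g \<in> C.
         (h \<otimes> g \<otimes> inv h) [^] n = h \<otimes> (g [^] n) \<otimes> inv h)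
    \<and> categorical (subtopology T C) (subtopology T C) (\<lambda>g. g [^] n)"
proof -
  let ?p = "\<lambda>g. g [^] n"
  have cc: "c \<in> carrier G" using c C_sub by blast
  have Ceq: "C = conj_class G c" using C_eq[OF c] .
  have cnC: "c [^] n \<in> C" using cpow n Ceq by blast
  then obtain k0 where k0: "k0 \<in> carrier G" "c [^] n = cj k0 c" unfolding Ceq conj_class_cj by blast
  have pcj: "cj h x [^] n = cj h (x [^] n)" if "h \<in> carrier G" "x \<in> carrier G" for h x
    using cj_pow[OF that, of n] by simp
  have pC: "?p x \<in> C" if x: "x \<in> C" for x
  proof -
    obtain h where h: "h \<in> carrier G" "x = cj h c" using x unfolding Ceq conj_class_cj by blast
    have "?p x = cj h (c [^] n)" using h cc pcj by simp
    then show ?thesis using C_cj[OF cnC h(1)] by simp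
  qed
  have img: "?p ` C = C"
  proof
    show "?p ` C \<subseteq> C" using pC by blast
    show "C \<subseteq> ?p ` C"
    proof
      fix x assume x: "x \<in> C"
      obtain h where h: "h \<in> carrier G" "x = cj h c" using x unfolding Ceq conj_class_cj by blast
      have ceq: "c = cj (inv k0) (c [^] n)" unfolding k0(2) using k0(1) cc by (simp add: cj_inv_cancel)
      have "x = cj h (cj (inv k0) (c [^] n))" unfolding h(2) by (rule arg_cong[where f="cj h", OF ceq])
      also have "\<dots> = cj (h \<otimes> inv k0) (c [^] n)" using h(1) k0(1) cc by (simp add: cj_cj)
      also have "\<dots> = ?p (cj (h \<otimes> inv k0) c)" using h(1) k0(1) cc pcj by simp
      finally have "x = ?p (cj (h \<otimes> inv k0) c)" .
      moreover have "cj (h \<otimes> inv k0) c \<in> C" using C_cj[OF c] h(1) k0(1) by simp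
      ultimately show "x \<in> ?p ` C" by blast
    qed
  qed
  have topC: "topspace (subtopology T C) = C" using C_sub topT by auto
  have cont: "continuous_map (subtopology T C) (subtopology T C) ?p"
    unfolding continuous_map_in_subtopology
  proof
    show "continuous_map (subtopology T C) T ?p"
      by (rule continuous_map_from_subtopology[OF cm_intpow])
    show "?p \<in> topspace (subtopology T C) \<rightarrow> C" using topC pC by blast
  qed
  have opn: "open_map (subtopology T C) (subtopology T C) ?p"
    unfolding open_map_def
  proof (intro allI impI)
    fix Ob assume "openin (subtopology T C) Ob"
    then obtain U where U: "openin T U" "Ob = U \<inter> C" unfolding openin_subtopology by blast
    show "openin (subtopology T C) (?p ` Ob)"
    proof (subst openin_subopen, intro ballI)
      fix y assume "y \<in> ?p ` Ob"
      then obtain x where x: "x \<in> U" "x \<in> C" "y = ?p x" using U(2) by blast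
      have xc: "x \<in> carrier G" using x C_sub by blast
      let ?V = "{g \<in> topspace T. cj g x \<in> U}"
      have Vo: "openin T ?V" by (rule openin_continuous_map_preimage[OF cm_orbit[OF xc] U(1)])
      have V1: "\<one> \<in> ?V" using x xc topT by simp
      have xnC: "?p x \<in> C" using pC[OF x(2)] .
      obtain N where N: "openin T N" "?p x \<in> N" "N \<inter> C \<subseteq> (\<lambda>g. cj g (?p x)) ` ?V"
        using stepO[OF xnC Vo V1] by blast
      show "\<exists>W. openin (subtopology T C) W \<and> y \<in> W \<and> W \<subseteq> ?p ` Ob"
      proof (intro exI conjI)
        show "openin (subtopology T C) (N \<inter> C)" by (rule openin_subtopology_Int[OF N(1)])
        show "y \<in> N \<inter> C" using N(2) xnC x(3) by blast
        show "N \<inter> C \<subseteq> ?p ` Ob"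
        proof
          fix z assume "z \<in> N \<inter> C"
          then obtain g where g: "g \<in> ?V" "z = cj g (?p x)" using N(3) by blast
          have gc: "g \<in> carrier G" using g topT by blast
          have "z = ?p (cj g x)" using g(2) pcj[OF gc xc] by simp
          moreover have "cj g x \<in> Ob" using g(1) C_cj[OF x(2) gc] U(2) by blast
          ultimately show "z \<in> ?p ` Ob" by blast
        qed
      qed
    qed
  qed
  have gmap: "\<forall>h \<in> carrier G. \<forall>g \<in> C. (h \<otimes> g \<otimes> inv h) [^] n = h \<otimes> (g [^] n) \<otimes> inv h"
  proof (intro ballI)
    fix h g assume h: "h \<in> carrier G" and g: "g \<in> C"
    have gc: "g \<in> carrier G" using g C_sub by blast
    show "(h \<otimes> g \<otimes> inv h) [^] n = h \<otimes> (g [^] n) \<otimes> inv h"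
      using pcj[OF h gc] unfolding cj_def .
  qed
  have cat: "categorical (subtopology T C) (subtopology T C) ?p"
  proof (rule categorical_general)
    show "\<And>U. openin (subtopology T C) U \<Longrightarrow> meagre (subtopology T C) U \<Longrightarrow> U = {}"
      using Baire_comeagre_subspace[OF Polish(1) Ccom] by blast
    show "\<And>B. analytic (subtopology T C) B \<Longrightarrow> bprop (subtopology T C) B"
      using bprop_analytic[OF _ Hausdorff_space_subtopology[OF HausT] second_countable_subtopology[OF scT]]
      by blast
    show "continuous_map (subtopology T C) (subtopology T C) ?p" by (rule cont)
    show "open_map (subtopology T C) (subtopology T C) ?p" by (rule opn)
    show "?p ` topspace (subtopology T C) = topspace (subtopology T C)" using img topC by simp
  qed
  show ?thesis using img cont opn gmap cat by blast
qed

end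


theorem mainTheorem11:
  fixes G :: "('a, 'b) monoid_scheme" and T :: "'a topology" and C :: "'a set"
  assumes "polish_group G T"
    and "\<exists>g \<in> carrier G. C = conj_class G g"
    and "comeagre T C"
    and "\<exists>c \<in> C. \<forall>k::int. k \<noteq> 0 \<longrightarrow> c [^]\<^bsub>G\<^esub> k \<in> conj_class G c"
    and "n \<noteq> (0::int)"
  shows "(\<lambda>g. g [^]\<^bsub>G\<^esub> n) ` C = C
    \<and> continuous_map (subtopology T C) (subtopology T C) (\<lambda>g. g [^]\<^bsub>G\<^esub> n)
    \<and> open_map (subtopology T C) (subtopology T C) (\<lambda>g. g [^]\<^bsub>G\<^esub> n)
    \<and> (\<forall>h \<in> carrier G. \<forall>g \<in> C.
         (h \<otimes>\<^bsub>G\<^esub> g \<otimes>\<^bsub>G\<^esub> inv\<^bsub>G\<^esub> h) [^]\<^bsub>G\<^esub> n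
           = h \<otimes>\<^bsub>G\<^esub> (g [^]\<^bsub>G\<^esub> n) \<otimes>\<^bsub>G\<^esub> inv\<^bsub>G\<^esub> h)
    \<and> categorical (subtopology T C) (subtopology T C) (\<lambda>g. g [^]\<^bsub>G\<^esub> n)"
proof -
  interpret pgc G T C
  proof unfold_locales
    show "polish_group G T" by (rule assms(1))
    show "\<exists>g\<in>carrier G. C = conj_class G g" by (rule assms(2))
    show "comeagre T C" by (rule assms(3))
  qed
  obtain c where c: "c \<in> C" "\<forall>k::int. k \<noteq> 0 \<longrightarrow> c [^]\<^bsub>G\<^esub> k \<in> conj_class G c"
    using assms(4) by blast
  show ?thesis by (rule main_pgc[OF c assms(5)])
qed

end
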